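(* For any $k,n\in\mathbb{N}$, we have \begin{align*} &\mathrm{reg}_{\overset{t}{\mathbin{\sqcup\!\sqcup}}}\left(\sum\limits_{w\in A^{\ast}\cap\mathfrak{h}^1\atop d_x(w)=k,d_y(w)=n}w\right)=\sum\limits_{i=1}^{n}(-1)^{i-1}t^{n-i}\sum\limits_{k_1+\cdots+k_{i}=k+n\atop k_1\geqslant k+1,k_2,\ldots,k_{i}\geqslant 1}\binom{k_1}{k+1}z_{k_1}\cdots z_{k_{i}}. \end{align*}
   Context: Let $A=\{x,y\}$ be an alphabet of two noncommutative letters, $A^{\ast}$ the set of words, $\mathfrak{h}_t=\mathbb{Q}[t]\langle A\rangle$, $\mathfrak{h}^1_t=\mathbb{Q}[t]+\mathfrak{h}_ty$, $\mathfrak{h}^0_t=\mathbb{Q}[t]+x\mathfrak{h}_ty$, $\mathfrak{h}^1=\mathbb{Q}+\mathbb{Q}\langle A\rangle y$; $z_k=x^{k-1}y$; for a word $w$, $d_a(w)$ is the number of occurrences of the letter $a$ in $w$. The $t$-shuffle product $\overset{t}{\mathbin{\sqcup\!\sqcup}}$ on $\mathfrak{h}_t$ is $\mathbb{Q}[t]$-bilinear with $1\overset{t}{\mathbin{\sqcup\!\sqcup}} w=w\overset{t}{\mathbin{\sqcup\!\sqcup}} 1=w$ and $aw_1\overset{t}{\mathbin{\sqcup\!\sqcup}} bw_2=a(w_1\overset{t}{\mathbin{\sqcup\!\sqcup}} bw_2)+b(aw_1\overset{t}{\mathbin{\sqcup\!\sqcup}} w_2)-\delta(w_1)\rho(a)bw_2-\delta(w_2)\rho(b)aw_1$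 for words $w_1,w_2$ and letters $a,b$, where $\delta(w)=1$ if $w$ is the empty word and $0$ otherwise, $\rho(x)=0$, $\rho(y)=tx$. As $\overset{t}{\mathbin{\sqcup\!\sqcup}}$-algebras, $\mathfrak{h}_t^1=\mathfrak{h}_t^0[y]$, i.e. every $w\in\mathfrak{h}^1_t$ is uniquely $w=\sum_{i\ge0}w_i\overset{t}{\mathbin{\sqcup\!\sqcup}} y^{\overset{t}{\mathbin{\sqcup\!\sqcup}} i}$ with $w_i\in\mathfrak{h}^0_t$; the $t$-shuffle regularization $\mathrm{reg}_{\overset{t}{\mathbin{\sqcup\!\sqcup}}}:\mathfrak{h}^1_t\to\mathfrak{h}^0_t$ is defined by $w\mapsto w_0$. *)

theory Defs
  imports Main "HOL-Computational_Algebra.Polynomial"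
begin

datatype letter = X | Y

type_synonym word = "letter list"

(* elements of h_t = Q[t]<A>: finitely supported maps words -> Q[t] *)
type_synonym ht = "word \<Rightarrow> rat poly"

definition supp :: "ht \<Rightarrow> word set" where
  "supp f = {w. f w \<noteq> 0}"

definition single :: "word \<Rightarrow> ht" where
  "single w = (\<lambda>u. if u = w then 1 else 0)"

definition lprefix :: "letter \<Rightarrow> ht \<Rightarrow> ht" where
  "lprefix a f = (\<lambda>u. case u of [] \<Rightarrow> 0 | b # v \<Rightarrow> if b = a then f v else 0)"

fun rho :: "letter \<Rightarrow> word \<Rightarrow> ht" where
  "rho X w = (\<lambda>u. 0)"
| "rho Y w = (\<lambda>u. if u = X # w then [:0, 1:] else 0)"

fun wsh :: "word \<Rightarrow> word \<Rightarrow> ht" where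
  "wsh [] w = single w"
| "wsh (a # w1) [] = single (a # w1)"
| "wsh (a # w1) (b # w2) =
     (\<lambda>u. lprefix a (wsh w1 (b # w2)) u + lprefix b (wsh (a # w1) w2) u
          - (if w1 = [] then rho a (b # w2) u else 0)
          - (if w2 = [] then rho b (a # w1) u else 0))"

definition tsh :: "ht \<Rightarrow> ht \<Rightarrow> ht" where
  "tsh f g = (\<lambda>u. \<Sum>v\<in>supp f. \<Sum>w\<in>supp g. f v * g w * wsh v w u)"

fun tpow :: "ht \<Rightarrow> nat \<Rightarrow> ht" where
  "tpow f 0 = single []"
| "tpow f (Suc i) = tsh (tpow f i) f"

definition h1t :: "ht \<Rightarrow> bool" where
  "h1t f \<longleftrightarrow> finite (supp f) \<and> (\<forall>w\<in>supp f. w = [] \<or> last w = Y)"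

definition h0t :: "ht \<Rightarrow> bool" where
  "h0t f \<longleftrightarrow> finite (supp f) \<and> (\<forall>w\<in>supp f. w = [] \<or> (hd w = X \<and> last w = Y))"

definition reg :: "ht \<Rightarrow> ht" where
  "reg f = (THE w0. \<exists>ws N. (\<forall>i. h0t (ws i)) \<and> (\<forall>i>N. ws i = (\<lambda>u. 0)) \<and>
      f = (\<lambda>u. \<Sum>i\<le>N. tsh (ws i) (tpow (single [Y]) i) u) \<and> w0 = ws 0)"

(* z_{k1} ... z_{ki}, with z_m = x^(m-1) y *)
definition zw :: "nat list \<Rightarrow> word" where
  "zw ks = concat (map (\<lambda>m. replicate (m - 1) X @ [Y]) ks)"

end

theory Submission
  imports Defs
begin

definition tt :: "rat poly" where "tt = [:0, 1:]"

lemma m1_poly[simp]: "[:- 1:] = (-1::rat poly)"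
  by (simp add: one_pCons)

definition fin :: "ht \<Rightarrow> bool" where "fin f \<longleftrightarrow> finite (supp f)"

lemma single_apply: "single w u = (if u = w then 1 else 0)"
  by (simp add: single_def)

lemma lprefix_Nil[simp]: "lprefix a f [] = 0"
  by (simp add: lprefix_def)
lemma lprefix_Cons[simp]: "lprefix a f (b # u) = (if b = a then f u else 0)"
  by (simp add: lprefix_def)

lemma rho_Nil[simp]: "rho a w [] = 0" by (cases a) auto
lemma rho_Y[simp]: "rho a w (Y # u) = 0" by (cases a) auto
lemma rho_X[simp]: "rho a w (X # u) = (if a = Y \<and> u = w then tt else 0)" by (cases a) (auto simp: tt_def)

lemma wsh_Nil_pt: "wsh v w [] = (if v = [] \<and> w = [] then 1 else 0)"
  by (cases v; cases w) (auto simp: single_def)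

definition cf :: "letter \<Rightarrow> word \<Rightarrow> (word \<Rightarrow> rat poly) \<Rightarrow> rat poly" where
  "cf a v F = (case v of [] \<Rightarrow> 0 | b # v' \<Rightarrow> (if b = a then F v' else 0))"

lemma wsh_right_Nil[simp]: "wsh v [] = single v" by (cases v) auto

lemma wsh_Y_pt: "wsh v w (Y # u) = cf Y v (\<lambda>v'. wsh v' w u) + cf Y w (\<lambda>w'. wsh v w' u)"
proof (cases v)
  case Nil then show ?thesis by (cases w) (auto simp: cf_def single_def)
next
  case (Cons a w1)
  show ?thesis
  proof (cases w)
    case Nil then show ?thesis using Cons by (auto simp: cf_def single_def)
  next
    case Cons2: (Cons b w2)
    show ?thesis unfolding Cons Cons2 by (cases a; cases b) (auto simp: cf_def)
  qed
qed

lemma wsh_X_pt: "wsh v w (X # u) = cf X v (\<lambda>v'. wsh v' w u) + cf X w (\<lambda>w'. wsh v w' u)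
   - (if v = [Y] \<and> w \<noteq> [] then tt * single w u else 0)
   - (if w = [Y] \<and> v \<noteq> [] then tt * single v u else 0)"
proof (cases v)
  case Nil then show ?thesis by (cases w) (auto simp: cf_def single_def)
next
  case (Cons a w1)
  show ?thesis
  proof (cases w)
    case Nil then show ?thesis using Cons by (auto simp: cf_def single_def)
  next
    case Cons2: (Cons b w2)
    show ?thesis unfolding Cons Cons2 by (cases a; cases b) (auto simp: cf_def single_def tt_def)
  qed
qed

lemma UNIV_letter: "(UNIV :: letter set) = {X, Y}"
  using letter.exhaust by auto

lemma finite_len: "finite {u::word. length u = n}"
proof -
  have "{u::word. length u = n} = {xs. set xs \<subseteq> UNIV \<and> length xs = n}" by auto
  moreover have "finite (UNIV :: letter set)" by (simp add: UNIV_letter)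
  ultimately show ?thesis using finite_lists_length_eq by metis
qed

lemma wsh_len: "length u \<noteq> length v + length w \<Longrightarrow> wsh v w u = 0"
proof (induction v w arbitrary: u rule: wsh.induct)
  case (1 w) then show ?case by (auto simp: single_def)
next
  case (2 a w1) then show ?case by (auto simp: single_def)
next
  case (3 a w1 b w2)
  show ?case
  proof (cases u)
    case Nil then show ?thesis by simp
  next
    case (Cons c u')
    have h1: "wsh w1 (b # w2) u' = 0" using 3(1)[of u'] 3(3) Cons by auto
    have h2: "wsh (a # w1) w2 u' = 0" using 3(2)[of u'] 3(3) Cons by auto
    have h3: "(if w1 = [] then rho a (b # w2) u else 0) = 0"
      using 3(3) Cons by (cases a; cases c) auto
    have h4: "(if w2 = [] then rho b (a # w1) u else 0) = 0"
      using 3(3) Cons by (cases b; cases c) auto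
    have e: "wsh (a # w1) (b # w2) u = lprefix a (wsh w1 (b#w2)) u + lprefix b (wsh (a#w1) w2) u
       - (if w1 = [] then rho a (b # w2) u else 0) - (if w2 = [] then rho b (a # w1) u else 0)" by simp
    have e1: "lprefix a (wsh w1 (b#w2)) u = 0" unfolding Cons lprefix_Cons h1 by simp
    have e2: "lprefix b (wsh (a#w1) w2) u = 0" unfolding Cons lprefix_Cons h2 by simp
    show ?thesis unfolding e e1 e2 h3 h4 by simp
  qed
qed

lemma fin_wsh: "fin (wsh v w)"
proof -
  have "supp (wsh v w) \<subseteq> {u. length u = length v + length w}"
    using wsh_len by (auto simp: supp_def)
  then show ?thesis unfolding fin_def using finite_len finite_subset by blast
qed

lemma fin_single[simp]: "fin (single w)"
  by (simp add: fin_def supp_def single_def)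

lemma fin_zero[simp]: "fin (\<lambda>u. 0)"
  by (simp add: fin_def supp_def)

lemma sum_supp_pt:
  assumes "fin f"
  shows "(\<Sum>v\<in>supp f. f v * (if v = x then c else 0)) = f x * c"
proof -
  have "(\<Sum>v\<in>supp f. f v * (if v = x then c else 0)) = (\<Sum>v\<in>supp f. if v = x then f x * c else 0)"
    by (rule sum.cong) auto
  also have "\<dots> = (if x \<in> supp f then f x * c else 0)"
    using assms by (simp add: fin_def)
  also have "\<dots> = f x * c" by (auto simp: supp_def)
  finally show ?thesis .
qed

lemma sum_supp_single:
  assumes "fin g"
  shows "(\<Sum>w\<in>supp g. g w * single w u) = g u"
  using sum_supp_pt[OF assms, of u 1] by (simp add: single_def eq_commute)

lemma tsh_Nil:
  assumes "fin f" "fin g"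
  shows "tsh f g [] = f [] * g []"
proof -
  have "tsh f g [] = (\<Sum>v\<in>supp f. f v * (if v = [] then (\<Sum>w\<in>supp g. g w * (if w = [] then 1 else 0)) else 0))"
    unfolding tsh_def wsh_Nil_pt
    by (rule sum.cong) (auto simp: sum_distrib_left intro!: sum.cong)
  also have "\<dots> = f [] * g []"
    using sum_supp_pt[OF assms(1)] sum_supp_pt[OF assms(2)] by simp
  finally show ?thesis .
qed

lemma cf_mult: "c * cf a v F = cf a v (\<lambda>v'. c * F v')"
  by (cases v) (auto simp: cf_def)

lemma cf_mult_self: "f v * cf a v F = cf a v (\<lambda>v'. f (a # v') * F v')"
  by (cases v) (auto simp: cf_def)

lemma cf_sum: "(\<Sum>w\<in>W. cf a v (F w)) = cf a v (\<lambda>v'. \<Sum>w\<in>W. F w v')"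
  by (cases v) (auto simp: cf_def)

lemma sum_cf:
  assumes "finite V"
  shows "(\<Sum>v\<in>V. cf a v F) = (\<Sum>v'\<in>Cons a -` V. F v')"
proof -
  have "(\<Sum>v'\<in>Cons a -` V. F v') = (\<Sum>v\<in>Cons a ` (Cons a -` V). F (tl v))"
    by (subst sum.reindex) (auto simp: inj_on_def)
  also have "\<dots> = (\<Sum>v\<in>V. cf a v F)"
    by (rule sum.mono_neutral_cong_left) (auto simp: assms cf_def split: list.splits)
  finally show ?thesis by simp
qed

lemma supp_vimage: "Cons a -` supp f = supp (\<lambda>v. f (a # v))"
  by (auto simp: supp_def)

lemma fin_der: "fin f \<Longrightarrow> fin (\<lambda>v. f (a # v))"
  unfolding fin_def supp_vimage[symmetric] by (auto intro: finite_vimageI simp: inj_on_def)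

lemma tsh_cf_left:
  assumes "fin f" "fin g"
  shows "(\<Sum>v\<in>supp f. \<Sum>w\<in>supp g. f v * g w * cf a v (\<lambda>v'. wsh v' w u))
       = tsh (\<lambda>v. f (a # v)) g u"
proof -
  have "(\<Sum>v\<in>supp f. \<Sum>w\<in>supp g. f v * g w * cf a v (\<lambda>v'. wsh v' w u))
      = (\<Sum>v\<in>supp f. cf a v (\<lambda>v'. \<Sum>w\<in>supp g. f (a # v') * g w * wsh v' w u))"
  proof (rule sum.cong[OF refl])
    fix v
    have "\<And>w. f v * g w * cf a v (\<lambda>v'. wsh v' w u) = cf a v (\<lambda>v'. f (a # v') * g w * wsh v' w u)"
      by (cases v) (auto simp: cf_def)
    then show "(\<Sum>w\<in>supp g. f v * g w * cf a v (\<lambda>v'. wsh v' w u))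
       = cf a v (\<lambda>v'. \<Sum>w\<in>supp g. f (a # v') * g w * wsh v' w u)"
      by (simp add: cf_sum)
  qed
  also have "\<dots> = tsh (\<lambda>v. f (a # v)) g u"
    unfolding sum_cf[OF assms(1)[unfolded fin_def]] supp_vimage tsh_def ..
  finally show ?thesis .
qed

lemma tsh_cf_right:
  assumes "fin f" "fin g"
  shows "(\<Sum>v\<in>supp f. \<Sum>w\<in>supp g. f v * g w * cf a w (\<lambda>w'. wsh v w' u))
       = tsh f (\<lambda>w. g (a # w)) u"
proof -
  have "(\<Sum>v\<in>supp f. \<Sum>w\<in>supp g. f v * g w * cf a w (\<lambda>w'. wsh v w' u))
      = (\<Sum>v\<in>supp f. \<Sum>w\<in>supp g. cf a w (\<lambda>w'. f v * g (a # w') * wsh v w' u))"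
  proof (intro sum.cong refl)
    fix v w
    show "f v * g w * cf a w (\<lambda>w'. wsh v w' u) = cf a w (\<lambda>w'. f v * g (a # w') * wsh v w' u)"
      by (cases w) (auto simp: cf_def)
  qed
  also have "\<dots> = tsh f (\<lambda>w. g (a # w)) u"
    unfolding sum_cf[OF assms(2)[unfolded fin_def]] supp_vimage tsh_def ..
  finally show ?thesis .
qed

lemma tsh_Y:
  assumes "fin f" "fin g"
  shows "tsh f g (Y # u) = tsh (\<lambda>v. f (Y # v)) g u + tsh f (\<lambda>w. g (Y # w)) u"
proof -
  have "tsh f g (Y # u) = (\<Sum>v\<in>supp f. \<Sum>w\<in>supp g. f v * g w * cf Y v (\<lambda>v'. wsh v' w u))
     + (\<Sum>v\<in>supp f. \<Sum>w\<in>supp g. f v * g w * cf Y w (\<lambda>w'. wsh v w' u))"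
    unfolding tsh_def wsh_Y_pt by (simp add: distrib_left sum.distrib)
  then show ?thesis using tsh_cf_left[OF assms] tsh_cf_right[OF assms] by simp
qed

lemma supp_single: "supp (single w) = {w}"
  by (auto simp: supp_def single_def)

lemma extra_term:
  assumes "fin f" "fin g"
  shows "(\<Sum>v\<in>supp f. \<Sum>w\<in>supp g. f v * g w * (if v = [Y] \<and> w \<noteq> [] then tt * single w u else 0))
        = tt * f [Y] * (if u = [] then 0 else g u)"
proof -
  have a: "\<And>w. (if w \<noteq> [] then tt * single w u else 0) = (if u = [] then 0 else tt * single w u)"
    by (auto simp: single_def)
  have "(\<Sum>v\<in>supp f. \<Sum>w\<in>supp g. f v * g w * (if v = [Y] \<and> w \<noteq> [] then tt * single w u else 0))
      = (\<Sum>v\<in>supp f. f v * (if v = [Y] then (\<Sum>w\<in>supp g. g w * (if u = [] then 0 else tt * single w u)) else 0))"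
    by (rule sum.cong) (auto simp: sum_distrib_left mult.assoc a intro!: sum.cong)
  also have "\<dots> = f [Y] * (\<Sum>w\<in>supp g. g w * (if u = [] then 0 else tt * single w u))"
    using sum_supp_pt[OF assms(1)] by simp
  also have "(\<Sum>w\<in>supp g. g w * (if u = [] then 0 else tt * single w u)) = (if u = [] then 0 else tt * g u)"
  proof (cases "u = []")
    case False
    have "(\<Sum>w\<in>supp g. g w * (tt * single w u)) = tt * (\<Sum>w\<in>supp g. g w * single w u)"
      by (simp add: sum_distrib_left mult.left_commute)
    then show ?thesis using False sum_supp_single[OF assms(2)] by simp
  qed simp
  finally show ?thesis by (simp add: mult.commute mult.left_commute)
qed

lemma tsh_X:
  assumes "fin f" "fin g"
  shows "tsh f g (X # u) = tsh (\<lambda>v. f (X # v)) g u + tsh f (\<lambda>w. g (X # w)) u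
     - tt * f [Y] * (if u = [] then 0 else g u) - tt * g [Y] * (if u = [] then 0 else f u)"
proof -
  have "tsh f g (X # u) = (\<Sum>v\<in>supp f. \<Sum>w\<in>supp g. f v * g w * cf X v (\<lambda>v'. wsh v' w u))
     + (\<Sum>v\<in>supp f. \<Sum>w\<in>supp g. f v * g w * cf X w (\<lambda>w'. wsh v w' u))
     - (\<Sum>v\<in>supp f. \<Sum>w\<in>supp g. f v * g w * (if v = [Y] \<and> w \<noteq> [] then tt * single w u else 0))
     - (\<Sum>w\<in>supp g. \<Sum>v\<in>supp f. g w * f v * (if w = [Y] \<and> v \<noteq> [] then tt * single v u else 0))"
    unfolding tsh_def wsh_X_pt
    by (subst (4) sum.swap) (simp add: algebra_simps sum.distrib sum_subtractf)
  then show ?thesis using tsh_cf_left[OF assms] tsh_cf_right[OF assms]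
      extra_term[OF assms] extra_term[OF assms(2,1)] by simp
qed

lemma tsh_superset:
  assumes "finite V" "supp f \<subseteq> V" "finite W" "supp g \<subseteq> W"
  shows "tsh f g u = (\<Sum>v\<in>V. \<Sum>w\<in>W. f v * g w * wsh v w u)"
proof -
  have "tsh f g u = (\<Sum>v\<in>V. \<Sum>w\<in>supp g. f v * g w * wsh v w u)"
    unfolding tsh_def by (rule sum.mono_neutral_left) (use assms in \<open>auto simp: supp_def\<close>)
  also have "\<dots> = (\<Sum>v\<in>V. \<Sum>w\<in>W. f v * g w * wsh v w u)"
    by (intro sum.cong refl sum.mono_neutral_left) (use assms in \<open>auto simp: supp_def\<close>)
  finally show ?thesis .
qed

lemma fin_lin: "fin f1 \<Longrightarrow> fin f2 \<Longrightarrow> fin (\<lambda>v. p * f1 v + q * f2 v)"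
  unfolding fin_def by (rule finite_subset[of _ "supp f1 \<union> supp f2"]) (auto simp: supp_def)

lemma fin_add: "fin f1 \<Longrightarrow> fin f2 \<Longrightarrow> fin (\<lambda>v. f1 v + f2 v)"
  unfolding fin_def by (rule finite_subset[of _ "supp f1 \<union> supp f2"]) (auto simp: supp_def)

lemma fin_diff: "fin f1 \<Longrightarrow> fin f2 \<Longrightarrow> fin (\<lambda>v. f1 v - f2 v)"
  unfolding fin_def by (rule finite_subset[of _ "supp f1 \<union> supp f2"]) (auto simp: supp_def)

lemma fin_scale: "fin f1 \<Longrightarrow> fin (\<lambda>v. p * f1 v)"
  unfolding fin_def by (rule finite_subset[of _ "supp f1"]) (auto simp: supp_def)

lemma fin_sum: "finite I \<Longrightarrow> (\<And>i. i \<in> I \<Longrightarrow> fin (F i)) \<Longrightarrow> fin (\<lambda>v. \<Sum>i\<in>I. F i v)"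
proof (induction I rule: finite_induct)
  case empty then show ?case by simp
next
  case (insert x F) then show ?case by (simp add: fin_add)
qed

lemma tsh_lin_left:
  assumes "fin f1" "fin f2" "fin g"
  shows "tsh (\<lambda>v. p * f1 v + q * f2 v) g u = p * tsh f1 g u + q * tsh f2 g u"
proof -
  let ?V = "supp f1 \<union> supp f2"
  have fV: "finite ?V" using assms by (simp add: fin_def)
  have s: "supp (\<lambda>v. p * f1 v + q * f2 v) \<subseteq> ?V" by (auto simp: supp_def)
  have gg: "finite (supp g)" using assms by (simp add: fin_def)
  have e1: "tsh f1 g u = (\<Sum>v\<in>?V. \<Sum>w\<in>supp g. f1 v * g w * wsh v w u)"
    by (rule tsh_superset[OF fV _ gg order.refl]) auto
  have e2: "tsh f2 g u = (\<Sum>v\<in>?V. \<Sum>w\<in>supp g. f2 v * g w * wsh v w u)"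
    by (rule tsh_superset[OF fV _ gg order.refl]) auto
  show ?thesis
    unfolding tsh_superset[OF fV s gg order.refl] e1 e2
    by (auto simp: algebra_simps sum.distrib sum_distrib_left)
qed

lemma tsh_lin_right:
  assumes "fin f" "fin g1" "fin g2"
  shows "tsh f (\<lambda>v. p * g1 v + q * g2 v) u = p * tsh f g1 u + q * tsh f g2 u"
proof -
  let ?W = "supp g1 \<union> supp g2"
  have fW: "finite ?W" using assms by (simp add: fin_def)
  have s: "supp (\<lambda>v. p * g1 v + q * g2 v) \<subseteq> ?W" by (auto simp: supp_def)
  have ff: "finite (supp f)" using assms by (simp add: fin_def)
  have e1: "tsh f g1 u = (\<Sum>v\<in>supp f. \<Sum>w\<in>?W. f v * g1 w * wsh v w u)"
    by (rule tsh_superset[OF ff order.refl fW]) auto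
  have e2: "tsh f g2 u = (\<Sum>v\<in>supp f. \<Sum>w\<in>?W. f v * g2 w * wsh v w u)"
    by (rule tsh_superset[OF ff order.refl fW]) auto
  show ?thesis
    unfolding tsh_superset[OF ff order.refl fW s] e1 e2
    by (auto simp: algebra_simps sum.distrib sum_distrib_left)
qed

lemma tsh_zero_left[simp]: "tsh (\<lambda>v. 0) g u = 0"
  by (simp add: tsh_def supp_def)

lemma tsh_zero_right[simp]: "tsh f (\<lambda>v. 0) u = 0"
  by (simp add: tsh_def supp_def)

lemma tsh_scale_left: "fin f \<Longrightarrow> fin g \<Longrightarrow> tsh (\<lambda>v. p * f v) g u = p * tsh f g u"
  using tsh_lin_left[of f "\<lambda>v. 0" g p 0 u] by simp

lemma tsh_scale_right: "fin f \<Longrightarrow> fin g \<Longrightarrow> tsh f (\<lambda>v. p * g v) u = p * tsh f g u"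
  using tsh_lin_right[of f g "\<lambda>v. 0" p 0 u] by simp

lemma tsh_add_left: "fin f1 \<Longrightarrow> fin f2 \<Longrightarrow> fin g \<Longrightarrow> tsh (\<lambda>v. f1 v + f2 v) g u = tsh f1 g u + tsh f2 g u"
  using tsh_lin_left[of f1 f2 g 1 1 u] by simp

lemma tsh_diff_left: "fin f1 \<Longrightarrow> fin f2 \<Longrightarrow> fin g \<Longrightarrow> tsh (\<lambda>v. f1 v - f2 v) g u = tsh f1 g u - tsh f2 g u"
  using tsh_lin_left[of f1 f2 g 1 "-1" u] by simp

lemma tsh_sum_left:
  assumes "finite I" "\<And>i. i \<in> I \<Longrightarrow> fin (F i)" "fin g"
  shows "tsh (\<lambda>v. \<Sum>i\<in>I. F i v) g u = (\<Sum>i\<in>I. tsh (F i) g u)"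
  using assms
proof (induction I rule: finite_induct)
  case empty then show ?case by simp
next
  case (insert x I)
  have "tsh (\<lambda>v. \<Sum>i\<in>insert x I. F i v) g u = tsh (\<lambda>v. F x v + (\<Sum>i\<in>I. F i v)) g u"
    using insert by simp
  also have "\<dots> = tsh (F x) g u + tsh (\<lambda>v. \<Sum>i\<in>I. F i v) g u"
    by (rule tsh_add_left) (use insert in \<open>auto intro: fin_sum\<close>)
  finally show ?case using insert by simp
qed

lemma single_same[simp]: "single w w = 1" by (simp add: single_def)

lemma tsh_unit_right: "fin f \<Longrightarrow> tsh f (single []) u = f u"
  unfolding tsh_def supp_single by (simp add: sum_supp_single)

lemma tsh_unit_left: "fin g \<Longrightarrow> tsh (single []) g u = g u"
  unfolding tsh_def supp_single by (simp add: sum_supp_single)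

lemma fin_tsh:
  assumes "fin f" "fin g"
  shows "fin (tsh f g)"
proof -
  have "supp (tsh f g) \<subseteq> (\<Union>v\<in>supp f. \<Union>w\<in>supp g. supp (wsh v w))"
  proof
    fix u assume "u \<in> supp (tsh f g)"
    then have "tsh f g u \<noteq> 0" by (simp add: supp_def)
    then obtain v w where "v \<in> supp f" "w \<in> supp g" "wsh v w u \<noteq> 0"
      unfolding tsh_def by (metis (no_types, lifting) mult_zero_right sum.neutral)
    then show "u \<in> (\<Union>v\<in>supp f. \<Union>w\<in>supp g. supp (wsh v w))" by (auto simp: supp_def)
  qed
  moreover have "finite (\<Union>v\<in>supp f. \<Union>w\<in>supp g. supp (wsh v w))"
    using assms fin_wsh by (auto simp: fin_def)
  ultimately show ?thesis unfolding fin_def using finite_subset by blast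
qed

fun Q :: "nat \<Rightarrow> ht" where
  "Q 0 = single []"
| "Q (Suc 0) = single [Y]"
| "Q (Suc (Suc i)) = (\<lambda>u. lprefix Y (Q (Suc i)) u - tt * lprefix X (Q (Suc i)) u)"

lemma Q_Nil: "Q i [] = (if i = 0 then 1 else 0)"
  by (induction i rule: Q.induct) (auto simp: single_def)

lemma Q_Y: "Q i (Y # u) = (if i = 0 then 0 else Q (i - 1) u)"
  by (cases i rule: Q.cases) (auto simp: single_def)

lemma Q_X: "Q i (X # u) = (if i \<le> 1 then 0 else - tt * Q (i - 1) u)"
  by (cases i rule: Q.cases) (auto simp: single_def)

lemma Q_atY: "Q i [Y] = (if i = 1 then 1 else 0)"
  by (simp add: Q_Y Q_Nil)

lemma Q_len: "length u \<noteq> i \<Longrightarrow> Q i u = 0"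
proof (induction i arbitrary: u rule: Q.induct)
  case 1 then show ?case by (auto simp: single_def)
next
  case 2 then show ?case by (auto simp: single_def)
next
  case (3 i) then show ?case by (cases u) auto
qed

lemma fin_Q: "fin (Q i)"
proof -
  have "supp (Q i) \<subseteq> {u. length u = i}" using Q_len by (auto simp: supp_def)
  then show ?thesis unfolding fin_def using finite_len finite_subset by blast
qed

lemma ext3:
  assumes "f [] = g []" "\<And>u. f (X # u) = g (X # u)" "\<And>u. f (Y # u) = g (Y # u)"
  shows "f = g"
proof
  fix u show "f u = g u"
  proof (cases u)
    case Nil then show ?thesis using assms by simp
  next
    case (Cons a v) then show ?thesis using assms by (cases a) auto
  qed
qed

lemma single_Nil_Cons[simp]: "single [] (a # v) = 0" by (simp add: single_def)

lemma dyQ: "(\<lambda>v. Q i (Y # v)) = (if i = 0 then (\<lambda>v. 0) else Q (i - 1))"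
  by (auto simp: Q_Y)

lemma dxQ: "(\<lambda>v. Q i (X # v)) = (if i \<le> 1 then (\<lambda>v. 0) else (\<lambda>v. - tt * Q (i - 1) v))"
  by (auto simp: Q_X)

lemma dy_y: "(\<lambda>w. single [Y] (Y # w)) = single []"
  by (auto simp: single_def)

lemma dx_y: "(\<lambda>w. single [Y] (X # w)) = (\<lambda>w. 0)"
  by (auto simp: single_def)

lemma tsh_Q_y_step:
  assumes IH: "i > 0 \<Longrightarrow> tsh (Q (i - 1)) (single [Y]) = (\<lambda>u. of_nat i * Q i u)"
  shows "tsh (Q i) (single [Y]) = (\<lambda>u. of_nat (i + 1) * Q (i + 1) u)"
proof (rule ext3)
  show "tsh (Q i) (single [Y]) [] = of_nat (i + 1) * Q (i + 1) []"
    using tsh_Nil[OF fin_Q fin_single, of i "[Y]"] by (simp add: Q_Nil single_def)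
next
  fix u
  have "tsh (Q i) (single [Y]) (Y # u) = tsh (\<lambda>v. Q i (Y # v)) (single [Y]) u + tsh (Q i) (single []) u"
    using tsh_Y[OF fin_Q fin_single, of i "[Y]" u] dy_y by simp
  also have "\<dots> = of_nat (i + 1) * Q i u"
  proof (cases "i = 0")
    case True then show ?thesis by (simp add: tsh_unit_right fin_Q)
  next
    case False
    then have "tsh (\<lambda>v. Q i (Y # v)) (single [Y]) u = of_nat i * Q i u"
      using IH by (simp add: dyQ)
    then show ?thesis by (simp add: tsh_unit_right fin_Q algebra_simps)
  qed
  finally show "tsh (Q i) (single [Y]) (Y # u) = of_nat (i + 1) * Q (i + 1) (Y # u)"
    by (simp add: Q_Y)
next
  fix u
  have "tsh (Q i) (single [Y]) (X # u) = tsh (\<lambda>v. Q i (X # v)) (single [Y]) u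
     - tt * Q i [Y] * (if u = [] then 0 else single [Y] u) - tt * (if u = [] then 0 else Q i u)"
    using tsh_X[OF fin_Q fin_single, of i "[Y]" u] dx_y by simp
  also have "\<dots> = of_nat (i + 1) * Q (i + 1) (X # u)"
  proof (cases "i \<le> 1")
    case True
    then consider "i = 0" | "i = 1" by linarith
    then show ?thesis
    proof cases
      case 1 then show ?thesis by (simp add: dxQ Q_X single_def)
    next
      case 2 then show ?thesis by (auto simp: dxQ Q_X single_def)
    qed
  next
    case False
    have "tsh (\<lambda>v. - tt * Q (i - 1) v) (single [Y]) u = - tt * tsh (Q (i - 1)) (single [Y]) u"
      by (rule tsh_scale_left) (simp_all add: fin_Q)
    then have "tsh (\<lambda>v. Q i (X # v)) (single [Y]) u = - tt * (of_nat i * Q i u)"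
      using IH False unfolding dxQ by simp
    moreover have "Q i [] = 0" using False by (simp add: Q_Nil)
    ultimately show ?thesis using False by (auto simp: Q_X Q_atY algebra_simps)
  qed
  finally show "tsh (Q i) (single [Y]) (X # u) = of_nat (i + 1) * Q (i + 1) (X # u)" .
qed

lemma tsh_Q_y: "tsh (Q i) (single [Y]) = (\<lambda>u. of_nat (i + 1) * Q (i + 1) u)"
proof (induction i)
  case 0 show ?case by (rule tsh_Q_y_step) simp
next
  case (Suc i) show ?case by (rule tsh_Q_y_step) (use Suc in simp)
qed

lemma tpow_Q: "tpow (single [Y]) i = (\<lambda>u. of_nat (fact i) * Q i u)"
proof (induction i)
  case 0 then show ?case by simp
next
  case (Suc i)
  have "tpow (single [Y]) (Suc i) = tsh (\<lambda>u. of_nat (fact i) * Q i u) (single [Y])"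
    using Suc by simp
  also have "\<dots> = (\<lambda>u. of_nat (fact i) * tsh (Q i) (single [Y]) u)"
    by (rule ext, rule tsh_scale_left) (auto simp: fin_Q)
  also have "\<dots> = (\<lambda>u. of_nat (fact (Suc i)) * Q (Suc i) u)"
    by (simp add: tsh_Q_y algebra_simps)
  finally show ?case .
qed

lemma uniq0:
  assumes "\<And>i. fin (c i)" "\<And>i u. c i (Y # u) = 0" "\<And>u. (\<Sum>i\<le>N. tsh (c i) (Q i) u) = 0"
  shows "\<forall>i\<le>N. \<forall>u. c i u = 0"
  using assms
proof (induction N arbitrary: c)
  case 0
  then show ?case by (simp add: tsh_unit_right)
next
  case (Suc N)
  have dyc: "\<And>i. (\<lambda>v. c i (Y # v)) = (\<lambda>v. 0)" using Suc.prems(2) by auto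
  have "\<And>u. (\<Sum>j\<le>N. tsh (c (Suc j)) (Q j) u) = 0"
  proof -
    fix u
    have "0 = (\<Sum>i\<le>Suc N. tsh (c i) (Q i) (Y # u))" using Suc.prems(3) by simp
    also have "\<dots> = (\<Sum>i\<le>Suc N. tsh (c i) (\<lambda>v. Q i (Y # v)) u)"
      using tsh_Y[OF Suc.prems(1) fin_Q] dyc by simp
    also have "\<dots> = (\<Sum>j\<le>N. tsh (c (Suc j)) (Q j) u)"
      by (subst sum.atMost_Suc_shift) (simp add: dyQ)
    finally show "(\<Sum>j\<le>N. tsh (c (Suc j)) (Q j) u) = 0" by simp
  qed
  then have h: "\<forall>j\<le>N. \<forall>u. c (Suc j) u = 0"
    using Suc.IH[of "\<lambda>j. c (Suc j)"] Suc.prems by blast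
  have "\<And>u. c 0 u = 0"
  proof -
    fix u
    have z: "\<And>j. j \<le> N \<Longrightarrow> c (Suc j) = (\<lambda>v. 0)" using h by auto
    have "0 = (\<Sum>i\<le>Suc N. tsh (c i) (Q i) u)" using Suc.prems(3) by simp
    also have "\<dots> = tsh (c 0) (Q 0) u + (\<Sum>j\<le>N. tsh (c (Suc j)) (Q (Suc j)) u)"
      by (subst sum.atMost_Suc_shift) simp
    also have "(\<Sum>j\<le>N. tsh (c (Suc j)) (Q (Suc j)) u) = 0"
      by (rule sum.neutral) (simp add: z)
    finally show "c 0 u = 0" by (simp add: tsh_unit_right Suc.prems(1))
  qed
  then show ?case using h by (metis le_SucE not0_implies_Suc Suc_le_mono le_zero_eq)
qed

lemma h0t_fin: "h0t f \<Longrightarrow> fin f" by (simp add: h0t_def fin_def)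
lemma h0t_Y: "h0t f \<Longrightarrow> f (Y # u) = 0" by (auto simp: h0t_def supp_def)

lemma sum_extend:
  fixes N M :: nat
  assumes "N \<le> M" "\<forall>i>N. ws i = (\<lambda>u. 0)"
  shows "(\<Sum>i\<le>N. tsh (ws i) (P i) u) = (\<Sum>i\<le>M. tsh (ws i) (P i) u)"
proof -
  have z: "\<forall>i\<in>{..M} - {..N}. tsh (ws i) (P i) u = 0"
  proof
    fix i assume "i \<in> {..M} - {..N}"
    then have "N < i" by auto
    then have "ws i = (\<lambda>u. 0)" using assms(2) by auto
    then show "tsh (ws i) (P i) u = 0" by simp
  qed
  show ?thesis
    by (metis (no_types, lifting) assms(1) atMost_subset_iff finite_atMost sum.mono_neutral_left z)
qed

lemma reg_char:
  assumes "\<forall>i. h0t (ws i)" "\<forall>i>N. ws i = (\<lambda>u. 0)"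
    "f = (\<lambda>u. \<Sum>i\<le>N. tsh (ws i) (tpow (single [Y]) i) u)"
  shows "reg f = ws 0"
  unfolding reg_def
proof (rule the_equality)
  show "\<exists>wsa N. (\<forall>i. h0t (wsa i)) \<and> (\<forall>i>N. wsa i = (\<lambda>u. 0)) \<and>
       f = (\<lambda>u. \<Sum>i\<le>N. tsh (wsa i) (tpow (single [Y]) i) u) \<and> ws 0 = wsa 0"
    using assms by blast
next
  fix w0
  assume "\<exists>ws' N'. (\<forall>i. h0t (ws' i)) \<and> (\<forall>i>N'. ws' i = (\<lambda>u. 0)) \<and>
       f = (\<lambda>u. \<Sum>i\<le>N'. tsh (ws' i) (tpow (single [Y]) i) u) \<and> w0 = ws' 0"
  then obtain ws' N' where A: "\<forall>i. h0t (ws' i)" "\<forall>i>N'. ws' i = (\<lambda>u. 0)"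
    "f = (\<lambda>u. \<Sum>i\<le>N'. tsh (ws' i) (tpow (single [Y]) i) u)" "w0 = ws' 0" by blast
  define M where "M = max N N'"
  define c where "c i = (\<lambda>u. of_nat (fact i) * (ws i u - ws' i u))" for i
  have fc: "\<And>i. fin (c i)" unfolding c_def using assms(1) A(1)
    by (intro fin_scale fin_diff) (auto intro: h0t_fin)
  have cY: "\<And>i u. c i (Y # u) = 0" unfolding c_def using assms(1) A(1) by (simp add: h0t_Y)
  have tp: "\<And>g i u. fin g \<Longrightarrow> tsh g (tpow (single [Y]) i) u = of_nat (fact i) * tsh g (Q i) u"
    unfolding tpow_Q by (rule tsh_scale_right) (auto simp: fin_Q)
  have S0: "\<And>u. (\<Sum>i\<le>M. tsh (c i) (Q i) u) = 0"
  proof -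
    fix u
    have "(\<Sum>i\<le>M. tsh (c i) (Q i) u) = (\<Sum>i\<le>M. tsh (ws i) (tpow (single [Y]) i) u - tsh (ws' i) (tpow (single [Y]) i) u)"
    proof (rule sum.cong[OF refl])
      fix i
      have "tsh (c i) (Q i) u = of_nat (fact i) * tsh (\<lambda>u. ws i u - ws' i u) (Q i) u"
        unfolding c_def by (rule tsh_scale_left) (use assms(1) A(1) in \<open>auto intro: fin_diff h0t_fin simp: fin_Q\<close>)
      also have "\<dots> = of_nat (fact i) * (tsh (ws i) (Q i) u - tsh (ws' i) (Q i) u)"
        by (subst tsh_diff_left) (use assms(1) A(1) in \<open>auto intro: h0t_fin simp: fin_Q\<close>)
      finally show "tsh (c i) (Q i) u = tsh (ws i) (tpow (single [Y]) i) u - tsh (ws' i) (tpow (single [Y]) i) u"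
        using tp assms(1) A(1) h0t_fin by (simp add: algebra_simps)
    qed
    also have "\<dots> = (\<Sum>i\<le>M. tsh (ws i) (tpow (single [Y]) i) u) - (\<Sum>i\<le>M. tsh (ws' i) (tpow (single [Y]) i) u)"
      by (simp add: sum_subtractf)
    also have "(\<Sum>i\<le>M. tsh (ws i) (tpow (single [Y]) i) u) = f u"
      using sum_extend[of N M ws] assms(2,3) by (simp add: M_def)
    also have "(\<Sum>i\<le>M. tsh (ws' i) (tpow (single [Y]) i) u) = f u"
      using sum_extend[of N' M ws'] A(2,3) by (simp add: M_def)
    finally show "(\<Sum>i\<le>M. tsh (c i) (Q i) u) = 0" by simp
  qed
  have "\<forall>u. c 0 u = 0" using uniq0[of c M, OF fc cY S0] by blast
  then show "w0 = ws 0" unfolding A(4) c_def by (auto simp: fun_eq_iff)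
qed

fun dec :: "word \<Rightarrow> nat list" where
  "dec [] = []"
| "dec (Y # u) = 1 # dec u"
| "dec (X # u) = (case dec u of [] \<Rightarrow> [] | h # r \<Rightarrow> Suc h # r)"

definition KK :: "nat \<Rightarrow> nat list set" where
  "KK M = {ks. ks \<noteq> [] \<and> (\<forall>j\<in>set ks. 1 \<le> j) \<and> sum_list ks = M}"

definition Zp :: "(nat list \<Rightarrow> rat poly) \<Rightarrow> nat \<Rightarrow> ht" where
  "Zp c M u = (if u \<noteq> [] \<and> last u = Y \<and> length u = M then c (dec u) else 0)"

lemma zw_Nil[simp]: "zw [] = []" by (simp add: zw_def)
lemma zw_Cons: "zw (m # r) = replicate (m - 1) X @ Y # zw r" by (simp add: zw_def)

lemma dec_rep: "dec (replicate j X @ Y # v) = Suc j # dec v"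
  by (induction j) auto

lemma dec_zw: "\<forall>j\<in>set ks. 1 \<le> j \<Longrightarrow> dec (zw ks) = ks"
  by (induction ks) (auto simp: zw_Cons dec_rep)

lemma len_zw: "\<forall>j\<in>set ks. 1 \<le> j \<Longrightarrow> length (zw ks) = sum_list ks"
  by (induction ks) (auto simp: zw_Cons)

lemma last_zw: "ks \<noteq> [] \<Longrightarrow> zw ks \<noteq> [] \<and> last (zw ks) = Y"
proof (induction ks)
  case (Cons m r) then show ?case by (cases "r = []") (auto simp: zw_Cons)
qed simp

lemma len_le_sum: "\<forall>j\<in>set ks. 1 \<le> j \<Longrightarrow> length ks \<le> sum_list ks"
  by (induction ks) auto

lemma KK_bound: "ks \<in> KK M \<Longrightarrow> hd ks + (length ks - 1) \<le> M"
proof (cases ks)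
  case (Cons h r)
  assume "ks \<in> KK M"
  then have "\<forall>j\<in>set r. 1 \<le> j" "sum_list ks = M" using Cons by (auto simp: KK_def)
  then show ?thesis using len_le_sum[of r] Cons by auto
qed (auto simp: KK_def)

lemma finite_KK: "finite (KK M)"
proof -
  have "KK M \<subseteq> {ks. set ks \<subseteq> {..M} \<and> length ks \<le> M}"
    unfolding KK_def using len_le_sum member_le_sum_list by fastforce
  then show ?thesis using finite_lists_length_le[of "{..M}" M] finite_subset by blast
qed

lemma dec_H: "u \<noteq> [] \<Longrightarrow> last u = Y \<Longrightarrow> dec u \<in> KK (length u) \<and> zw (dec u) = u"
proof (induction u)
  case Nil then show ?case by simp
next
  case (Cons a u)
  show ?case
  proof (cases a)
    case Y
    show ?thesis
    proof (cases "u = []")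
      case True then show ?thesis using Y by (simp add: KK_def zw_Cons)
    next
      case False
      then have "dec u \<in> KK (length u) \<and> zw (dec u) = u" using Cons by simp
      then show ?thesis using Y by (auto simp: KK_def zw_Cons)
    qed
  next
    case X
    then have ne: "u \<noteq> []" using Cons by auto
    then have IH: "dec u \<in> KK (length u) \<and> zw (dec u) = u" using Cons by simp
    then obtain h r where hr: "dec u = h # r" by (cases "dec u") (auto simp: KK_def)
    have h1: "1 \<le> h" using IH hr by (auto simp: KK_def)
    have "zw (Suc h # r) = X # zw (h # r)"
      using h1 by (cases h) (auto simp: zw_Cons)
    then show ?thesis using IH hr X by (auto simp: KK_def)
  qed
qed

lemma zw_eq_iff:
  assumes "ks \<in> KK M"
  shows "(u = zw ks) \<longleftrightarrow> (u \<noteq> [] \<and> last u = Y \<and> length u = M \<and> ks = dec u)"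
proof
  assume u: "u = zw ks"
  have "\<forall>j\<in>set ks. 1 \<le> j" "ks \<noteq> []" "sum_list ks = M" using assms by (auto simp: KK_def)
  then show "u \<noteq> [] \<and> last u = Y \<and> length u = M \<and> ks = dec u"
    using u last_zw len_zw dec_zw by metis
next
  assume "u \<noteq> [] \<and> last u = Y \<and> length u = M \<and> ks = dec u"
  then show "u = zw ks" using dec_H by metis
qed

lemma sum_single_zw:
  assumes "K \<subseteq> KK M"
  shows "(\<Sum>ks\<in>K. c ks * single (zw ks) u)
       = (if u \<noteq> [] \<and> last u = Y \<and> length u = M \<and> dec u \<in> K then c (dec u) else 0)"
proof -
  have fK: "finite K" using assms finite_KK finite_subset by blast
  have "(\<Sum>ks\<in>K. c ks * single (zw ks) u)
      = (\<Sum>ks\<in>K. if dec u = ks then (if u \<noteq> [] \<and> last u = Y \<and> length u = M then c ks else 0) else 0)"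
  proof (rule sum.cong[OF refl])
    fix ks assume "ks \<in> K"
    then have "ks \<in> KK M" using assms by auto
    then show "c ks * single (zw ks) u
       = (if dec u = ks then (if u \<noteq> [] \<and> last u = Y \<and> length u = M then c ks else 0) else 0)"
      using zw_eq_iff[of ks M u] by (auto simp: single_def)
  qed
  also have "\<dots> = (if u \<noteq> [] \<and> last u = Y \<and> length u = M \<and> dec u \<in> K then c (dec u) else 0)"
    using fK by simp
  finally show ?thesis .
qed

lemma Zp_Nil[simp]: "Zp c M [] = 0" by (simp add: Zp_def)

lemma Zp_KK: "Zp c M u \<noteq> 0 \<Longrightarrow> dec u \<in> KK M"
  by (metis Zp_def dec_H)

lemma Zp_X: "Zp c M (X # u) = Zp (\<lambda>ks. c (Suc (hd ks) # tl ks)) (M - 1) u"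
proof (cases "u \<noteq> [] \<and> last u = Y \<and> length u = M - 1 \<and> M \<ge> 1")
  case True
  then have "dec u \<in> KK (length u)" using dec_H by blast
  then obtain h r where "dec u = h # r" by (cases "dec u") (auto simp: KK_def)
  then show ?thesis using True by (auto simp: Zp_def)
next
  case False
  then show ?thesis by (auto simp: Zp_def)
qed

lemma Zp_Y: "Zp c M (Y # u) = (if u = [] \<and> M = 1 then c [1] else 0) + Zp (\<lambda>ks. c (1 # ks)) (M - 1) u"
  by (cases "u = []") (auto simp: Zp_def)

lemma Zp_atY: "Zp c M [Y] = (if M = 1 then c [1] else 0)"
  by (simp add: Zp_Y)

lemma Zp_cong: "(\<And>ks. ks \<in> KK M \<Longrightarrow> c ks = c' ks) \<Longrightarrow> Zp c M u = Zp c' M u"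
  by (metis Zp_def dec_H)

lemma Zp_lin: "Zp (\<lambda>ks. p * c1 ks + q * c2 ks) M u = p * Zp c1 M u + q * Zp c2 M u"
  by (simp add: Zp_def)

lemma Zp_zero: "Zp (\<lambda>ks. 0) M u = 0"
  by (simp add: Zp_def)

lemma fin_Zp: "fin (Zp c M)"
proof -
  have "supp (Zp c M) \<subseteq> {u. length u = M}" by (auto simp: supp_def Zp_def split: if_splits)
  then show ?thesis unfolding fin_def using finite_len finite_subset by blast
qed

definition aa :: "nat \<Rightarrow> nat \<Rightarrow> nat list \<Rightarrow> rat poly" where
  "aa k m ks = (-1) ^ (length ks - 1) * tt ^ (m - length ks) * of_nat (hd ks choose (k + 1))"

definition A :: "nat \<Rightarrow> nat \<Rightarrow> ht" where "A k m = Zp (aa k m) (k + m)"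

definition uu :: "nat \<Rightarrow> nat list \<Rightarrow> rat poly" where
  "uu m ks = (-1) ^ (length ks - 1) * tt ^ (m - length ks)"

definition U :: "nat \<Rightarrow> ht" where "U m = Zp (uu m) m"

lemma Zp_M0: "Zp c 0 u = 0" by (auto simp: Zp_def)

lemma KK_ne: "ks \<in> KK M \<Longrightarrow> ks \<noteq> []" by (simp add: KK_def)

lemma KK_len: "ks \<in> KK M \<Longrightarrow> length ks \<le> M"
  unfolding KK_def using len_le_sum by auto

lemma tt_pow_shift:
  assumes "c = 0 \<or> L < m"
  shows "tt ^ (m - L) * c = tt * (tt ^ (m - 1 - L) * c)"
proof (cases "c = 0")
  case False
  then have "m - L = Suc (m - 1 - L)" using assms by auto
  then show ?thesis by simp
qed simp

lemma A_X:
  assumes "1 \<le> k" "1 \<le> m"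
  shows "A k m (X # u) = tt * A k (m - 1) u + A (k - 1) m u"
proof -
  have "A k m (X # u) = Zp (\<lambda>ks. aa k m (Suc (hd ks) # tl ks)) (k + m - 1) u"
    unfolding A_def by (simp add: Zp_X)
  also have "\<dots> = Zp (\<lambda>ks. tt * aa k (m - 1) ks + 1 * aa (k - 1) m ks) (k + m - 1) u"
  proof (rule Zp_cong)
    fix ks assume ks: "ks \<in> KK (k + m - 1)"
    then obtain h r where hr: "ks = h # r" by (cases ks) (auto simp: KK_def)
    have b: "hd ks + (length ks - 1) \<le> k + m - 1" using KK_bound[OF ks] .
    let ?s = "(-1 :: rat poly) ^ (length ks - 1)"
    have e1: "tt ^ (m - length ks) * of_nat (h choose Suc k) = tt * (tt ^ (m - 1 - length ks) * of_nat (h choose Suc k))"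
    proof (rule tt_pow_shift)
      show "of_nat (h choose Suc k) = (0::rat poly) \<or> length ks < m"
      proof (cases "Suc k \<le> h")
        case True then show ?thesis using b hr assms by auto
      qed (simp add: binomial_eq_0)
    qed
    have "aa k m (Suc (hd ks) # tl ks) = ?s * tt ^ (m - length ks) * (of_nat (h choose k) + of_nat (h choose Suc k))"
      unfolding aa_def using hr by simp
    also have "\<dots> = tt * (?s * (tt ^ (m - 1 - length ks) * of_nat (h choose Suc k))) + ?s * tt ^ (m - length ks) * of_nat (h choose k)"
      using e1 by (simp add: algebra_simps)
    also have "\<dots> = tt * aa k (m - 1) ks + 1 * aa (k - 1) m ks"
      unfolding aa_def using hr assms by (simp add: algebra_simps)
    finally show "aa k m (Suc (hd ks) # tl ks) = tt * aa k (m - 1) ks + 1 * aa (k - 1) m ks" .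
  qed
  also have "\<dots> = tt * A k (m - 1) u + A (k - 1) m u"
    unfolding Zp_lin A_def using assms by (simp add: add.commute)
  finally show ?thesis .
qed

lemma A_X0:
  assumes "1 \<le> m"
  shows "A 0 m (X # u) = tt * A 0 (m - 1) u + tt * U (m - 1) u"
proof -
  have "A 0 m (X # u) = Zp (\<lambda>ks. aa 0 m (Suc (hd ks) # tl ks)) (m - 1) u"
    unfolding A_def by (simp add: Zp_X)
  also have "\<dots> = Zp (\<lambda>ks. tt * aa 0 (m - 1) ks + tt * uu (m - 1) ks) (m - 1) u"
  proof (rule Zp_cong)
    fix ks assume ks: "ks \<in> KK (m - 1)"
    then obtain h r where hr: "ks = h # r" by (cases ks) (auto simp: KK_def)
    have b: "length ks \<le> m - 1" using KK_len[OF ks] .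
    have "m - length ks = Suc (m - 1 - length ks)" using b assms by auto
    then show "aa 0 m (Suc (hd ks) # tl ks) = tt * aa 0 (m - 1) ks + tt * uu (m - 1) ks"
      unfolding aa_def uu_def using hr by (simp add: algebra_simps)
  qed
  also have "\<dots> = tt * A 0 (m - 1) u + tt * U (m - 1) u"
    unfolding Zp_lin A_def U_def by simp
  finally show ?thesis .
qed

lemma A_Y:
  assumes "1 \<le> k"
  shows "A k m (Y # u) = 0"
proof -
  have "A k m (Y # u) = (if u = [] \<and> k + m = 1 then aa k m [1] else 0) + Zp (\<lambda>ks. aa k m (1 # ks)) (k + m - 1) u"
    unfolding A_def by (simp add: Zp_Y)
  also have "Zp (\<lambda>ks. aa k m (1 # ks)) (k + m - 1) u = Zp (\<lambda>ks. 0) (k + m - 1) u"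
    by (rule Zp_cong) (use assms in \<open>simp add: aa_def binomial_eq_0\<close>)
  finally show ?thesis using assms by (simp add: aa_def binomial_eq_0 Zp_zero)
qed

lemma A_Y0:
  assumes "1 \<le> m"
  shows "A 0 m (Y # u) = (if u = [] \<and> m = 1 then 1 else 0) - U (m - 1) u"
proof -
  have "A 0 m (Y # u) = (if u = [] \<and> m = 1 then aa 0 m [1] else 0) + Zp (\<lambda>ks. aa 0 m (1 # ks)) (m - 1) u"
    unfolding A_def by (simp add: Zp_Y)
  also have "Zp (\<lambda>ks. aa 0 m (1 # ks)) (m - 1) u = Zp (\<lambda>ks. (-1) * uu (m - 1) ks + 0 * uu (m - 1) ks) (m - 1) u"
  proof (rule Zp_cong)
    fix ks assume ks: "ks \<in> KK (m - 1)"
    then have "ks \<noteq> []" by (rule KK_ne)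
    then obtain L where L: "length ks = Suc L" by (cases ks) auto
    show "aa 0 m (1 # ks) = (-1) * uu (m - 1) ks + 0 * uu (m - 1) ks"
      unfolding aa_def uu_def using L by simp
  qed
  finally show ?thesis unfolding Zp_lin U_def by (simp add: aa_def)
qed

lemma A_atY: "A k m [Y] = (if k = 0 \<and> m = 1 then 1 else 0)"
  unfolding A_def Zp_atY by (auto simp: aa_def binomial_eq_0 add_is_1)

lemma A_m0: "A k 0 u = 0"
proof -
  have "A k 0 u = Zp (\<lambda>ks. 0) k u"
    unfolding A_def
  proof (simp, rule Zp_cong)
    fix ks assume ks: "ks \<in> KK k"
    have "hd ks \<le> k" using KK_bound[OF ks] by simp
    then show "aa k 0 ks = 0" by (simp add: aa_def binomial_eq_0)
  qed
  then show ?thesis by (simp add: Zp_zero)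
qed

lemma A_Nil[simp]: "A k m [] = 0" by (simp add: A_def)
lemma fin_A: "fin (A k m)" by (simp add: A_def fin_Zp)

lemma U_X:
  assumes "1 \<le> m"
  shows "U m (X # u) = tt * U (m - 1) u"
proof -
  have "U m (X # u) = Zp (\<lambda>ks. uu m (Suc (hd ks) # tl ks)) (m - 1) u"
    unfolding U_def by (simp add: Zp_X)
  also have "\<dots> = Zp (\<lambda>ks. tt * uu (m - 1) ks + 0 * uu (m - 1) ks) (m - 1) u"
  proof (rule Zp_cong)
    fix ks assume ks: "ks \<in> KK (m - 1)"
    then obtain h r where hr: "ks = h # r" by (cases ks) (auto simp: KK_def)
    have b: "length ks \<le> m - 1" using KK_len[OF ks] .
    have "m - length ks = Suc (m - 1 - length ks)" using b assms by auto
    then show "uu m (Suc (hd ks) # tl ks) = tt * uu (m - 1) ks + 0 * uu (m - 1) ks"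
      unfolding uu_def using hr by (simp add: algebra_simps)
  qed
  finally show ?thesis unfolding Zp_lin U_def by simp
qed

lemma U_Y:
  assumes "1 \<le> m"
  shows "U m (Y # u) = (if u = [] \<and> m = 1 then 1 else 0) - U (m - 1) u"
proof -
  have "U m (Y # u) = (if u = [] \<and> m = 1 then uu m [1] else 0) + Zp (\<lambda>ks. uu m (1 # ks)) (m - 1) u"
    unfolding U_def by (simp add: Zp_Y)
  also have "Zp (\<lambda>ks. uu m (1 # ks)) (m - 1) u = Zp (\<lambda>ks. (-1) * uu (m - 1) ks + 0 * uu (m - 1) ks) (m - 1) u"
  proof (rule Zp_cong)
    fix ks assume ks: "ks \<in> KK (m - 1)"
    then have "ks \<noteq> []" by (rule KK_ne)
    then obtain L where L: "length ks = Suc L" by (cases ks) auto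
    show "uu m (1 # ks) = (-1) * uu (m - 1) ks + 0 * uu (m - 1) ks"
      unfolding uu_def using L by simp
  qed
  moreover have "(if u = [] \<and> m = 1 then uu m [1] else 0) = (if u = [] \<and> m = 1 then 1 else 0)"
    by (simp add: uu_def)
  ultimately show ?thesis unfolding Zp_lin U_def by simp
qed

lemma U_atY: "U m [Y] = (if m = 1 then 1 else 0)"
  unfolding U_def Zp_atY by (simp add: uu_def)

lemma U_0[simp]: "U 0 u = 0" by (simp add: U_def Zp_M0)
lemma U_Nil[simp]: "U m [] = 0" by (simp add: U_def)
lemma fin_U: "fin (U m)" by (simp add: U_def fin_Zp)

lemma A_h0:
  assumes "1 \<le> k" "A k m u \<noteq> 0"
  shows "u \<noteq> [] \<and> hd u = X \<and> last u = Y"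
proof -
  have "u \<noteq> [] \<and> last u = Y" using assms(2) by (auto simp: A_def Zp_def split: if_splits)
  moreover have "hd u = X"
  proof (cases u)
    case (Cons a v)
    then show ?thesis using A_Y[OF assms(1), of m v] assms(2) by (cases a) auto
  qed (use assms in simp)
  ultimately show ?thesis by simp
qed

lemma single_Y_X[simp]: "single [Y] (X # w) = 0" by (simp add: single_def)

definition T :: "(nat \<Rightarrow> ht) \<Rightarrow> nat \<Rightarrow> ht" where
  "T F n u = (\<Sum>i<n. tsh (F (n - i)) (Q i) u)"

lemma T_0[simp]: "T F 0 u = 0" by (simp add: T_def)

lemma T_Nil:
  assumes "\<And>m. fin (F m)" "\<And>m. F m [] = 0"
  shows "T F n [] = 0"
  unfolding T_def by (simp add: tsh_Nil assms fin_Q)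

lemma shift_sum:
  fixes n :: nat and g :: "nat \<Rightarrow> nat \<Rightarrow> rat poly"
  shows "(\<Sum>i<n. (if i = 0 then (0::rat poly) else g (n - i) (i - 1))) = (\<Sum>j<n - 1. g (n - 1 - j) j)"
proof (cases "n = 0")
  case False
  then obtain n' where nS: "n = Suc n'" by (cases n) auto
  have "(\<Sum>i<Suc n'. (if i = 0 then (0::rat poly) else g (Suc n' - i) (i - 1)))
      = (\<Sum>i<n'. g (n' - i) i)"
    by (subst sum.lessThan_Suc_shift) simp
  then show ?thesis unfolding nS by simp
qed simp

lemma T_Y:
  assumes "\<And>m. fin (F m)"
  shows "T F n (Y # u) = T (\<lambda>m v. F m (Y # v)) n u + T F (n - 1) u"
proof -
  have "T F n (Y # u) = (\<Sum>i<n. tsh (\<lambda>v. F (n - i) (Y # v)) (Q i) u + tsh (F (n - i)) (\<lambda>v. Q i (Y # v)) u)"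
    unfolding T_def by (rule sum.cong[OF refl], rule tsh_Y[OF assms fin_Q])
  also have "\<dots> = T (\<lambda>m v. F m (Y # v)) n u + (\<Sum>i<n. tsh (F (n - i)) (\<lambda>v. Q i (Y # v)) u)"
    by (simp add: sum.distrib T_def)
  also have "(\<Sum>i<n. tsh (F (n - i)) (\<lambda>v. Q i (Y # v)) u) = (\<Sum>i<n. (if i = 0 then 0 else tsh (F (n - i)) (Q (i - 1)) u))"
    by (rule sum.cong[OF refl]) (simp add: dyQ)
  also have "\<dots> = T F (n - 1) u"
    unfolding shift_sum[where n=n and g="\<lambda>a b. tsh (F a) (Q b) u"] T_def by (simp add: diff_diff_add add.commute)
  finally show ?thesis .
qed

lemma T_X:
  assumes "\<And>m. fin (F m)" "\<And>m. F m [] = 0"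
  shows "T F n (X # u) = T (\<lambda>m v. F m (X # v)) n u - tt * T F (n - 1) u
           - tt * (\<Sum>i<n. F (n - i) [Y] * (if u = [] then 0 else Q i u))"
proof -
  define g where "g i = tsh (F (n - i)) (\<lambda>v. Q i (X # v)) u - tt * Q i [Y] * (if u = [] then 0 else F (n - i) u)" for i
  have "T F n (X # u) = (\<Sum>i<n. tsh (\<lambda>v. F (n - i) (X # v)) (Q i) u + g i
          - tt * (F (n - i) [Y] * (if u = [] then 0 else Q i u)))"
    unfolding T_def g_def by (rule sum.cong[OF refl]) (simp add: tsh_X[OF assms(1) fin_Q] algebra_simps)
  also have "\<dots> = T (\<lambda>m v. F m (X # v)) n u + (\<Sum>i<n. g i)
          - tt * (\<Sum>i<n. F (n - i) [Y] * (if u = [] then 0 else Q i u))"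
    by (simp add: sum.distrib sum_subtractf sum_distrib_left T_def)
  also have "(\<Sum>i<n. g i) = (\<Sum>i<n. (if i = 0 then 0 else (- tt) * tsh (F (n - i)) (Q (i - 1)) u))"
  proof (rule sum.cong[OF refl])
    fix i :: nat
    consider "i = 0" | "i = 1" | "i \<ge> 2" by linarith
    then show "g i = (if i = 0 then 0 else (- tt) * tsh (F (n - i)) (Q (i - 1)) u)"
    proof cases
      case 1 then show ?thesis by (simp add: g_def dxQ Q_atY)
    next
      case 2 then show ?thesis
        by (simp add: g_def dxQ Q_atY tsh_unit_right assms)
    next
      case 3
      have "tsh (F (n - i)) (\<lambda>v. - tt * Q (i - 1) v) u = - tt * tsh (F (n - i)) (Q (i - 1)) u"
        by (rule tsh_scale_right) (simp_all add: assms fin_Q)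
      then show ?thesis using 3 by (simp add: g_def dxQ Q_atY)
    qed
  qed
  also have "\<dots> = - tt * T F (n - 1) u"
    unfolding shift_sum[where n=n and g="\<lambda>a b. (- tt) * tsh (F a) (Q b) u"] T_def
    by (simp add: diff_diff_add add.commute sum_distrib_left)
  finally show ?thesis by simp
qed

lemma T_cong: "(\<And>m. 1 \<le> m \<Longrightarrow> m \<le> n \<Longrightarrow> F m = G m) \<Longrightarrow> T F n u = T G n u"
  unfolding T_def by (rule sum.cong) auto

lemma T_lin:
  assumes "\<And>m. fin (F1 m)" "\<And>m. fin (F2 m)"
  shows "T (\<lambda>m v. p * F1 m v + q * F2 m v) n u = p * T F1 n u + q * T F2 n u"
  unfolding T_def by (simp add: tsh_lin_left assms fin_Q sum.distrib sum_distrib_left)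

lemma T_pred:
  assumes "1 \<le> n"
  shows "T (\<lambda>m. G (m - 1)) n u = T G (n - 1) u + tsh (G 0) (Q (n - 1)) u"
proof -
  obtain n' where n: "n = Suc n'" using assms by (cases n) auto
  show ?thesis unfolding T_def n by (simp add: Suc_diff_le)
qed

lemma U0_fun: "U 0 = (\<lambda>v. 0)" by auto
lemma A0_fun: "A k 0 = (\<lambda>v. 0)" by (auto simp: A_m0)

lemma sum_last:
  fixes n :: nat and f :: "nat \<Rightarrow> rat poly"
  assumes "1 \<le> n"
  shows "(\<Sum>i<n. (if n - i = 1 then (1::rat poly) else 0) * f i) = f (n - 1)"
proof -
  obtain n' where n: "n = Suc n'" using assms by (cases n) auto
  have "(\<Sum>i<n'. (if Suc n' - i = 1 then (1::rat poly) else 0) * f i) = 0"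
    by (rule sum.neutral) auto
  then show ?thesis unfolding n by simp
qed

lemma T_dyform:
  assumes "\<And>m v. 1 \<le> m \<Longrightarrow> F m (Y # v) = (if v = [] \<and> m = 1 then 1 else 0) - U (m - 1) v"
    and "1 \<le> n"
  shows "T (\<lambda>m v. F m (Y # v)) n u = Q (n - 1) u - T U (n - 1) u"
proof -
  have "T (\<lambda>m v. F m (Y # v)) n u = T (\<lambda>m v. (if m = 1 then 1 else 0) * single [] v + (-1) * U (m - 1) v) n u"
    by (rule T_cong) (auto simp: assms(1) single_def)
  also have "\<dots> = (\<Sum>i<n. (if n - i = 1 then 1 else 0) * Q i u + (-1) * tsh (U (n - i - 1)) (Q i) u)"
    unfolding T_def
  proof (rule sum.cong[OF refl])
    fix i :: nat
    show "tsh (\<lambda>v. (if n - i = 1 then 1 else 0) * single [] v + (-1) * U (n - i - 1) v) (Q i) u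
        = (if n - i = 1 then 1 else 0) * Q i u + (-1) * tsh (U (n - i - 1)) (Q i) u"
      by (subst tsh_lin_left) (simp_all add: fin_U fin_Q tsh_unit_left)
  qed
  also have "\<dots> = (\<Sum>i<n. (if n - i = 1 then 1 else 0) * Q i u) - T (\<lambda>m. U (m - 1)) n u"
    unfolding T_def by (simp add: sum.distrib sum_subtractf)
  also have "\<dots> = Q (n - 1) u - T U (n - 1) u"
  proof -
    have s1: "(\<Sum>i<n. (if n - i = 1 then 1 else 0) * Q i u) = Q (n - 1) u"
      by (rule sum_last[OF assms(2)])
    have s2: "T (\<lambda>m. U (m - 1)) n u = T U (n - 1) u"
      using T_pred[OF assms(2), where G=U] by (simp add: U0_fun)
    show ?thesis by (simp only: s1 s2)
  qed
  finally show ?thesis .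
qed

lemma V_lemma:
  assumes "1 \<le> M"
  shows "T U M u = Q M u"
proof -
  have "T U M = Q M"
  proof (rule ext3)
    show "T U M [] = Q M []" using assms by (simp add: T_Nil fin_U Q_Nil)
  next
    fix u
    have "T U M (Y # u) = Q (M - 1) u - T U (M - 1) u + T U (M - 1) u"
      using T_Y[where F=U and n=M and u=u, OF fin_U] T_dyform[where F=U and n=M and u=u] U_Y assms by simp
    then show "T U M (Y # u) = Q M (Y # u)" using assms by (simp add: Q_Y)
  next
    fix u
    have dx: "T (\<lambda>m v. U m (X # v)) M u = tt * T U (M - 1) u"
    proof -
      have "T (\<lambda>m v. U m (X # v)) M u = T (\<lambda>m v. tt * U (m - 1) v + 0 * U m v) M u"
        by (rule T_cong) (auto simp: U_X)
      also have "\<dots> = tt * T (\<lambda>m. U (m - 1)) M u" by (subst T_lin) (auto simp: fin_U)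
      also have "\<dots> = tt * T U (M - 1) u" using T_pred[OF assms, where G=U] by (simp add: U0_fun)
      finally show ?thesis .
    qed
    have th: "(\<Sum>i<M. U (M - i) [Y] * (if u = [] then 0 else Q i u)) = (if u = [] then 0 else Q (M - 1) u)"
      unfolding U_atY using sum_last[OF assms, of "\<lambda>i. if u = [] then 0 else Q i u"] by simp
    have "T U M (X # u) = - tt * (if u = [] then 0 else Q (M - 1) u)"
      using T_X[where F=U and n=M and u=u, OF fin_U] dx th by simp
    then show "T U M (X # u) = Q M (X # u)" using assms by (auto simp: Q_X Q_Nil single_def)
  qed
  then show ?thesis by simp
qed

definition Sf :: "nat \<Rightarrow> nat \<Rightarrow> ht" where
  "Sf k n u = (if (u = [] \<or> last u = Y) \<and> count_list u X = k \<and> count_list u Y = n then 1 else 0)"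

lemma Sf_Nil: "Sf k n [] = (if k = 0 \<and> n = 0 then 1 else 0)"
  by (simp add: Sf_def)

lemma Sf_X: "1 \<le> n \<Longrightarrow> Sf k n (X # u) = (if k = 0 then 0 else Sf (k - 1) n u)"
  by (cases "u = []") (auto simp: Sf_def)

lemma Sf_Y: "Sf k n (Y # u) = (if n = 0 then 0 else Sf k (n - 1) u)"
  by (cases "u = []") (auto simp: Sf_def)

lemma Sf_k0:
  assumes "1 \<le> k" shows "Sf k 0 u = 0"
proof (cases "u = []")
  case True then show ?thesis using assms by (simp add: Sf_def)
next
  case False
  have "count_list u Y \<noteq> 0" if "last u = Y" using that False last_in_set count_list_0_iff by metis
  then show ?thesis using False by (auto simp: Sf_def)
qed

lemma Sf_00: "Sf 0 0 u = Q 0 u"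
proof (cases u)
  case (Cons a v)
  then show ?thesis by (cases a) (auto simp: Sf_def single_def)
qed (simp add: Sf_def)

lemma T_zero: "T (\<lambda>m v. 0) n u = 0" by (simp add: T_def)

lemma main_step:
  assumes outer: "1 \<le> k \<Longrightarrow> (\<And>n. 1 \<le> n \<Longrightarrow> Sf (k - 1) n = T (A (k - 1)) n)"
    and inner: "2 \<le> n \<Longrightarrow> Sf k (n - 1) = T (A k) (n - 1)"
    and n1: "1 \<le> n"
  shows "Sf k n = T (A k) n"
proof (rule ext3)
  show "Sf k n [] = T (A k) n []"
    using n1 by (simp add: Sf_Nil T_Nil fin_A)
next
  fix u
  have TY: "T (A k) n (Y # u) = T (\<lambda>m v. A k m (Y # v)) n u + T (A k) (n - 1) u"
    by (rule T_Y) (rule fin_A)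
  show "Sf k n (Y # u) = T (A k) n (Y # u)"
  proof (cases "k = 0")
    case True
    have d: "T (\<lambda>m v. A 0 m (Y # v)) n u = Q (n - 1) u - T U (n - 1) u"
      by (rule T_dyform[OF _ n1]) (simp add: A_Y0)
    show ?thesis
    proof (cases "n = 1")
      case True
      then show ?thesis using TY d \<open>k = 0\<close> by (simp add: Sf_Y Sf_00)
    next
      case False
      then have "T U (n - 1) u = Q (n - 1) u" using n1 by (intro V_lemma) auto
      then show ?thesis using TY d \<open>k = 0\<close> inner n1 False by (simp add: Sf_Y)
    qed
  next
    case False
    have d: "T (\<lambda>m v. A k m (Y # v)) n u = 0"
      using A_Y[of k] False by (simp add: T_zero)
    show ?thesis
    proof (cases "n = 1")
      case True
      then show ?thesis using TY d False by (simp add: Sf_Y Sf_k0)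
    next
      case False
      then show ?thesis using TY d inner n1 by (simp add: Sf_Y)
    qed
  qed
next
  fix u
  have TX: "T (A k) n (X # u) = T (\<lambda>m v. A k m (X # v)) n u - tt * T (A k) (n - 1) u
           - tt * (\<Sum>i<n. A k (n - i) [Y] * (if u = [] then 0 else Q i u))"
    by (rule T_X) (simp_all add: fin_A)
  show "Sf k n (X # u) = T (A k) n (X # u)"
  proof (cases "k = 0")
    case True
    have "T (\<lambda>m v. A 0 m (X # v)) n u = T (\<lambda>m v. tt * A 0 (m - 1) v + tt * U (m - 1) v) n u"
      by (rule T_cong) (auto simp: A_X0)
    also have "\<dots> = tt * T (\<lambda>m. A 0 (m - 1)) n u + tt * T (\<lambda>m. U (m - 1)) n u"
      by (subst T_lin) (auto simp: fin_A fin_U)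
    also have "\<dots> = tt * T (A 0) (n - 1) u + tt * T U (n - 1) u"
      using T_pred[OF n1, where G="A 0"] T_pred[OF n1, where G=U] by (simp add: U0_fun A0_fun)
    finally have d: "T (\<lambda>m v. A 0 m (X # v)) n u = tt * T (A 0) (n - 1) u + tt * T U (n - 1) u" .
    have th: "(\<Sum>i<n. A 0 (n - i) [Y] * (if u = [] then 0 else Q i u)) = (if u = [] then 0 else Q (n - 1) u)"
      unfolding A_atY using sum_last[OF n1, of "\<lambda>i. if u = [] then 0 else Q i u"] by simp
    have "T (A 0) n (X # u) = tt * (T U (n - 1) u - (if u = [] then 0 else Q (n - 1) u))"
      using TX d th True by (simp add: algebra_simps)
    also have "\<dots> = 0"
    proof (cases "n = 1")
      case True then show ?thesis by (simp add: single_def)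
    next
      case False
      then have "T U (n - 1) u = Q (n - 1) u" using n1 by (intro V_lemma) auto
      moreover have "Q (n - 1) [] = 0" using False n1 by (simp add: Q_Nil)
      ultimately show ?thesis by auto
    qed
    finally show ?thesis using True n1 by (simp add: Sf_X)
  next
    case False
    then have k1: "1 \<le> k" by simp
    have "T (\<lambda>m v. A k m (X # v)) n u = T (\<lambda>m v. tt * A k (m - 1) v + 1 * A (k - 1) m v) n u"
      by (rule T_cong) (auto simp: A_X[OF k1])
    also have "\<dots> = tt * T (\<lambda>m. A k (m - 1)) n u + 1 * T (A (k - 1)) n u"
      by (subst T_lin) (auto simp: fin_A)
    also have "\<dots> = tt * T (A k) (n - 1) u + T (A (k - 1)) n u"
      using T_pred[OF n1, where G="A k"] by (simp add: A0_fun)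
    finally have d: "T (\<lambda>m v. A k m (X # v)) n u = tt * T (A k) (n - 1) u + T (A (k - 1)) n u" .
    have th: "(\<Sum>i<n. A k (n - i) [Y] * (if u = [] then 0 else Q i u)) = 0"
      using False by (simp add: A_atY)
    have "T (A k) n (X # u) = T (A (k - 1)) n u" using TX d th by simp
    also have "\<dots> = Sf (k - 1) n u" using outer[OF k1 n1] by simp
    finally show ?thesis using False n1 by (simp add: Sf_X)
  qed
qed

lemma main_all: "1 \<le> n \<Longrightarrow> Sf k n = T (A k) n"
proof (induction k arbitrary: n)
  case 0
  show ?case using 0
  proof (induction n rule: nat_induct_at_least)
    case base show ?case by (rule main_step) simp_all
  next
    case (Suc n)
    have IH: "Sf 0 n = T (A 0) n" by (rule Suc.IH)
    show ?case
    proof (rule main_step)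
      show "Sf 0 (Suc n - 1) = T (A 0) (Suc n - 1)" using IH by simp
    qed simp_all
  qed
next
  case (Suc k)
  have OIH: "\<And>n. 1 \<le> n \<Longrightarrow> Sf (Suc k - 1) n = T (A (Suc k - 1)) n" using Suc.IH by simp
  show ?case using Suc.prems
  proof (induction n rule: nat_induct_at_least)
    case base show ?case by (rule main_step[OF OIH]) simp_all
  next
    case (Suc n)
    have IH: "Sf (Suc k) n = T (A (Suc k)) n" by (rule Suc.IH)
    show ?case
    proof (rule main_step[OF OIH])
      show "Sf (Suc k) (Suc n - 1) = T (A (Suc k)) (Suc n - 1)" using IH by simp
    qed simp_all
  qed
qed

lemma len_count: "length u = count_list u X + count_list u Y"
proof (induction u)
  case (Cons a u) then show ?case by (cases a) auto
qed simp

lemma LHS_eq: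
  "(\<lambda>u. \<Sum>w\<in>{w. (w = [] \<or> last w = Y) \<and> count_list w X = k \<and> count_list w Y = n}. single w u) = Sf k n"
proof
  fix u
  let ?W = "{w. (w = [] \<or> last w = Y) \<and> count_list w X = k \<and> count_list w Y = n}"
  have "?W \<subseteq> {u. length u = k + n}" using len_count by auto
  then have fW: "finite ?W" using finite_len finite_subset by blast
  have "(\<Sum>w\<in>?W. single w u) = (\<Sum>w\<in>?W. if u = w then 1 else 0)"
    by (simp add: single_def)
  also have "\<dots> = (if u \<in> ?W then 1 else 0)" using fW by simp
  finally show "(\<Sum>w\<in>?W. single w u) = Sf k n u" by (simp add: Sf_def)
qed

lemma RHS_eq:
  fixes k n :: nat
  shows "(\<lambda>u. \<Sum>i=1..n. (-1) ^ (i - 1) * [:0, 1:] ^ (n - i) *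
            (\<Sum>ks\<in>{ks. length ks = i \<and> (\<forall>j\<in>set ks. 1 \<le> j) \<and> sum_list ks = k + n \<and> k + 1 \<le> hd ks}.
               of_nat (hd ks choose (k + 1)) * single (zw ks) u)) = A k n"
proof
  fix u
  let ?K = "\<lambda>i. {ks. length ks = i \<and> (\<forall>j\<in>set ks. 1 \<le> j) \<and> sum_list ks = k + n \<and> k + 1 \<le> hd ks}"
  let ?H = "u \<noteq> [] \<and> last u = Y \<and> length u = k + n"
  let ?d = "dec u"
  have inner: "(\<Sum>ks\<in>?K i. of_nat (hd ks choose (k + 1)) * single (zw ks) u)
      = (if ?H \<and> length ?d = i \<and> k + 1 \<le> hd ?d then of_nat (hd ?d choose (k + 1)) else 0)"
    if i1: "1 \<le> i" for i
  proof -
    have sub: "?K i \<subseteq> KK (k + n)" using i1 by (auto simp: KK_def)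
    have "(\<Sum>ks\<in>?K i. of_nat (hd ks choose (k + 1)) * single (zw ks) u)
       = (if ?H \<and> ?d \<in> ?K i then of_nat (hd ?d choose (k + 1)) else 0)"
      using sum_single_zw[OF sub, of "\<lambda>ks. of_nat (hd ks choose (k + 1))" u] by simp
    also have "\<dots> = (if ?H \<and> length ?d = i \<and> k + 1 \<le> hd ?d then of_nat (hd ?d choose (k + 1)) else 0)"
    proof (cases ?H)
      case True
      then have "?d \<in> KK (k + n)" using dec_H by metis
      then show ?thesis by (auto simp: KK_def)
    next
      case False
      have a: "\<not> (?H \<and> ?d \<in> ?K i)" using False by blast
      have b: "\<not> (?H \<and> length ?d = i \<and> k + 1 \<le> hd ?d)" using False by blast
      show ?thesis by (simp only: if_not_P[OF a] if_not_P[OF b])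
    qed
    finally show ?thesis .
  qed
  have "(\<Sum>i=1..n. (-1) ^ (i - 1) * [:0, 1:] ^ (n - i) *
            (\<Sum>ks\<in>?K i. of_nat (hd ks choose (k + 1)) * single (zw ks) u))
      = (\<Sum>i=1..n. if i = length ?d then (if ?H \<and> k + 1 \<le> hd ?d then
           (-1) ^ (i - 1) * tt ^ (n - i) * of_nat (hd ?d choose (k + 1)) else 0) else 0)"
  proof (rule sum.cong[OF refl])
    fix i assume "i \<in> {1..n}"
    then have i1: "1 \<le> i" by simp
    show "(-1) ^ (i - 1) * [:0, 1:] ^ (n - i) *
            (\<Sum>ks\<in>?K i. of_nat (hd ks choose (k + 1)) * single (zw ks) u)
      = (if i = length ?d then (if ?H \<and> k + 1 \<le> hd ?d then
           (-1) ^ (i - 1) * tt ^ (n - i) * of_nat (hd ?d choose (k + 1)) else 0) else 0)"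
      unfolding inner[OF i1] tt_def by auto
  qed
  also have "\<dots> = (if length ?d \<in> {1..n} \<and> ?H \<and> k + 1 \<le> hd ?d then
           (-1) ^ (length ?d - 1) * tt ^ (n - length ?d) * of_nat (hd ?d choose (k + 1)) else 0)"
    by (subst sum.delta) auto
  also have "\<dots> = A k n u"
  proof (cases ?H)
    case True
    then have dK: "?d \<in> KK (k + n)" using dec_H by metis
    have "A k n u = aa k n ?d" using True by (simp add: A_def Zp_def)
    moreover have "length ?d \<ge> 1" using dK by (cases ?d) (auto simp: KK_def)
    moreover have "k + 1 \<le> hd ?d \<Longrightarrow> length ?d \<le> n" using KK_bound[OF dK] by auto
    moreover have "\<not> k + 1 \<le> hd ?d \<Longrightarrow> (hd ?d choose (k + 1)) = 0" by (simp add: binomial_eq_0)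
    ultimately show ?thesis using True by (auto simp: aa_def)
  next
    case False
    then show ?thesis by (auto simp: A_def Zp_def)
  qed
  finally show "(\<Sum>i=1..n. (-1) ^ (i - 1) * [:0, 1:] ^ (n - i) *
            (\<Sum>ks\<in>?K i. of_nat (hd ks choose (k + 1)) * single (zw ks) u)) = A k n u" .
qed

lemma inv_fact: "[:inverse (of_nat (fact i) :: rat):] * (of_nat (fact i) :: rat poly) = 1"
  by (simp add: of_nat_poly one_pCons)

theorem lemma3p3:
  fixes k n :: nat
  assumes "1 \<le> k" and "1 \<le> n"
  shows "reg (\<lambda>u. \<Sum>w\<in>{w. (w = [] \<or> last w = Y) \<and> count_list w X = k \<and> count_list w Y = n}.
                    single w u)
       = (\<lambda>u. \<Sum>i=1..n. (-1) ^ (i - 1) * [:0, 1:] ^ (n - i) *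
            (\<Sum>ks\<in>{ks. length ks = i \<and> (\<forall>j\<in>set ks. 1 \<le> j) \<and> sum_list ks = k + n \<and> k + 1 \<le> hd ks}.
               of_nat (hd ks choose (k + 1)) * single (zw ks) u))"
proof -
  define ws where "ws i = (if i < n then (\<lambda>u. [:inverse (of_nat (fact i) :: rat):] * A k (n - i) u) else (\<lambda>u. 0))" for i
  have h0: "\<forall>i. h0t (ws i)"
  proof
    fix i
    show "h0t (ws i)"
    proof (cases "i < n")
      case True
      have wsi: "ws i = (\<lambda>u. [:inverse (of_nat (fact i) :: rat):] * A k (n - i) u)"
        by (simp only: ws_def True if_True)
      have "fin (ws i)" unfolding wsi by (rule fin_scale[OF fin_A])
      moreover have "\<forall>w\<in>supp (ws i). w = [] \<or> (hd w = X \<and> last w = Y)"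
        using True A_h0[OF assms(1)] by (auto simp: ws_def supp_def)
      ultimately show ?thesis by (simp add: h0t_def fin_def)
    next
      case False
      then show ?thesis by (simp add: ws_def h0t_def supp_def)
    qed
  qed
  have zero: "\<forall>i>n. ws i = (\<lambda>u. 0)" by (simp add: ws_def)
  have dec: "Sf k n = (\<lambda>u. \<Sum>i\<le>n. tsh (ws i) (tpow (single [Y]) i) u)"
  proof
    fix u
    have "Sf k n u = (\<Sum>i<n. tsh (A k (n - i)) (Q i) u)" using main_all[OF assms(2)] by (simp add: T_def)
    also have "\<dots> = (\<Sum>i<n. tsh (ws i) (tpow (single [Y]) i) u)"
    proof (rule sum.cong[OF refl])
      fix i assume "i \<in> {..<n}"
      then have il: "i < n" by simp
      have "tsh (ws i) (tpow (single [Y]) i) u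
          = tsh (\<lambda>u. [:inverse (of_nat (fact i) :: rat):] * A k (n - i) u) (\<lambda>u. of_nat (fact i) * Q i u) u"
        using il by (simp add: ws_def tpow_Q)
      also have "\<dots> = [:inverse (of_nat (fact i) :: rat):] * tsh (A k (n - i)) (\<lambda>u. of_nat (fact i) * Q i u) u"
        by (rule tsh_scale_left) (auto simp: fin_A fin_scale fin_Q)
      also have "\<dots> = [:inverse (of_nat (fact i) :: rat):] * (of_nat (fact i) * tsh (A k (n - i)) (Q i) u)"
        by (subst tsh_scale_right) (auto simp: fin_A fin_Q)
      also have "\<dots> = tsh (A k (n - i)) (Q i) u"
        by (simp only: mult.assoc[symmetric] inv_fact mult_1)
      finally show "tsh (A k (n - i)) (Q i) u = tsh (ws i) (tpow (single [Y]) i) u" by simp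
    qed
    also have "\<dots> = (\<Sum>i\<le>n. tsh (ws i) (tpow (single [Y]) i) u)"
      by (simp add: lessThan_Suc_atMost[symmetric] ws_def)
    finally show "Sf k n u = (\<Sum>i\<le>n. tsh (ws i) (tpow (single [Y]) i) u)" .
  qed
  have "reg (Sf k n) = ws 0" by (rule reg_char[OF h0 zero dec])
  also have "ws 0 = A k n" using assms(2) by (simp add: ws_def)
  finally show ?thesis unfolding LHS_eq RHS_eq .
qed

end
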